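(* Assume $b_0\neq 0$. Then $$X(b_0)=\bigcup_{n\in\mathbb{Z}} (t^n,t^{-n})\cdot M(b_0)(\mathcal{O}_{\overline{E}}).$$ In particular, if $b_0\notin \mathcal{O}_{\overline{E}}$ then $X(b_0)=\emptyset$.
   Context: Let $\overline{E}$ be a nonarchimedean local field with ring of integers $\mathcal{O}_{\overline{E}}$ and residue field $k$ of characteristic $\neq 2$, and let $t\in\mathcal{O}_{\overline{E}}$ be a uniformizer. Consider the split quadratic extension $\overline{K}=\overline{E}\oplus\overline{E}$. For $b_0\in\overline{E}$, let $M(b_0)$ denote the set of pairs of column vectors $x=(x_1,x_2)^T$, $y=(y_1,y_2)^T$ in $\overline{E}^2$ with $\det(x,y)=x_1y_2-x_2y_1=b_0$ (i.e. $2\times 2$ matrices with columns $x,y$ and determinant $b_0$), and $M(b_0)(\mathcal{O}_{\overline{E}})$ the subset of such pairs with all entries in $\mathcal{O}_{\overline{E}}$. Let $X(b_0)\subset M(b_0)$ be the subset of $(x,y)$ such that $x_1x_2\in\mathcal{O}_{\overline{E}}$, $y_1y_2\in\mathcal{O}_{\overline{E}}$ and $x_1y_2+x_2y_1\in\mathcal{O}_{\overline{E}}$. The element $(t^n,t^{-n})\in \overline{K}^*$ (of norm $1$) acts on $M(b_0)$ by $(x_1,x_2,y_1,y_2)\mapsto (t^nx_1,t^{-n}x_2,t^ny_1,t^{-n}y_2)$. *)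

theory Defs
  imports Main
begin

text \<open>A normalized discrete valuation on a field, given on nonzero elements
  (the value at 0 is irrelevant; 0 is treated as having valuation +infinity).\<close>
definition discrete_valuation :: "('a::field \<Rightarrow> int) \<Rightarrow> bool" where
  "discrete_valuation v \<longleftrightarrow>
     (\<forall>x y. x \<noteq> 0 \<longrightarrow> y \<noteq> 0 \<longrightarrow> v (x * y) = v x + v y) \<and>
     (\<forall>x y. x \<noteq> 0 \<longrightarrow> y \<noteq> 0 \<longrightarrow> x + y \<noteq> 0 \<longrightarrow> min (v x) (v y) \<le> v (x + y)) \<and>
     (\<exists>t. t \<noteq> 0 \<and> v t = 1)"

definition val_ge :: "('a::field \<Rightarrow> int) \<Rightarrow> int \<Rightarrow> 'a set" where
  "val_ge v N = {x. x = 0 \<or> N \<le> v x}"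

definition ring_of_integers :: "('a::field \<Rightarrow> int) \<Rightarrow> 'a set" where
  "ring_of_integers v = val_ge v 0"

definition val_complete :: "('a::field \<Rightarrow> int) \<Rightarrow> bool" where
  "val_complete v \<longleftrightarrow>
     (\<forall>X :: nat \<Rightarrow> 'a.
        (\<forall>N. \<exists>M. \<forall>m\<ge>M. \<forall>n\<ge>M. X m - X n \<in> val_ge v N) \<longrightarrow>
        (\<exists>L. \<forall>N. \<exists>M. \<forall>n\<ge>M. X n - L \<in> val_ge v N))"

definition finite_residue_field :: "('a::field \<Rightarrow> int) \<Rightarrow> bool" where
  "finite_residue_field v \<longleftrightarrow>
     (\<exists>S. finite S \<and> S \<subseteq> ring_of_integers v \<and>
          (\<forall>x\<in>ring_of_integers v. \<exists>s\<in>S. x - s \<in> val_ge v 1))"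

text \<open>Residue characteristic different from 2: 2 is a unit of the ring of integers.\<close>
definition residue_char_not_2 :: "('a::field \<Rightarrow> int) \<Rightarrow> bool" where
  "residue_char_not_2 v \<longleftrightarrow> (2::'a) \<noteq> 0 \<and> v 2 = 0"

definition nonarch_local_field :: "('a::field \<Rightarrow> int) \<Rightarrow> bool" where
  "nonarch_local_field v \<longleftrightarrow> discrete_valuation v \<and> val_complete v \<and> finite_residue_field v"

definition uniformizer :: "('a::field \<Rightarrow> int) \<Rightarrow> 'a \<Rightarrow> bool" where
  "uniformizer v t \<longleftrightarrow> t \<noteq> 0 \<and> v t = 1"

text \<open>Pairs of column vectors x = (x1,x2), y = (y1,y2), encoded as (x1,x2,y1,y2).\<close>
definition Mset :: "'a::field \<Rightarrow> ('a \<times> 'a \<times> 'a \<times> 'a) set" where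
  "Mset b0 = {(x1, x2, y1, y2). x1 * y2 - x2 * y1 = b0}"

definition Mset_int :: "('a::field \<Rightarrow> int) \<Rightarrow> 'a \<Rightarrow> ('a \<times> 'a \<times> 'a \<times> 'a) set" where
  "Mset_int v b0 = {(x1, x2, y1, y2) \<in> Mset b0.
      x1 \<in> ring_of_integers v \<and> x2 \<in> ring_of_integers v \<and>
      y1 \<in> ring_of_integers v \<and> y2 \<in> ring_of_integers v}"

definition Xset :: "('a::field \<Rightarrow> int) \<Rightarrow> 'a \<Rightarrow> ('a \<times> 'a \<times> 'a \<times> 'a) set" where
  "Xset v b0 = {(x1, x2, y1, y2) \<in> Mset b0.
      x1 * x2 \<in> ring_of_integers v \<and> y1 * y2 \<in> ring_of_integers v \<and>
      x1 * y2 + x2 * y1 \<in> ring_of_integers v}"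

definition tact :: "'a::field \<Rightarrow> int \<Rightarrow> 'a \<times> 'a \<times> 'a \<times> 'a \<Rightarrow> 'a \<times> 'a \<times> 'a \<times> 'a" where
  "tact t n = (\<lambda>(x1, x2, y1, y2).
      (t powi n * x1, t powi (-n) * x2, t powi n * y1, t powi (-n) * y2))"

end

theory Submission
  imports Defs
begin

lemma dv_mult: "discrete_valuation v \<Longrightarrow> x \<noteq> 0 \<Longrightarrow> y \<noteq> 0 \<Longrightarrow> v (x * y) = v x + v y"
  unfolding discrete_valuation_def by blast

lemma dv_add: "discrete_valuation v \<Longrightarrow> x \<noteq> 0 \<Longrightarrow> y \<noteq> 0 \<Longrightarrow> x + y \<noteq> 0 \<Longrightarrow> min (v x) (v y) \<le> v (x + y)"
  unfolding discrete_valuation_def by blast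

lemma dv_one: "discrete_valuation v \<Longrightarrow> v (1::'a::field) = 0"
  using dv_mult[of v "1::'a" 1] by simp

lemma dv_inverse: "discrete_valuation v \<Longrightarrow> (x::'a::field) \<noteq> 0 \<Longrightarrow> v (inverse x) = - v x"
  using dv_mult[of v x "inverse x"] dv_one[of v] by simp

lemma dv_minus_one: "discrete_valuation v \<Longrightarrow> v (-1::'a::field) = 0"
  using dv_mult[of v "-1::'a" "-1"] dv_one[of v] by simp

lemma dv_uminus: "discrete_valuation v \<Longrightarrow> (x::'a::field) \<noteq> 0 \<Longrightarrow> v (- x) = v x"
  using dv_mult[of v "-1::'a" x] dv_minus_one[of v] by simp

lemma dv_power: "discrete_valuation v \<Longrightarrow> (t::'a::field) \<noteq> 0 \<Longrightarrow> v (t ^ k) = int k * v t"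
proof (induction k)
  case 0 then show ?case using dv_one by simp
next
  case (Suc k) then show ?case using dv_mult[of v t "t^k"] by (simp add: algebra_simps)
qed

lemma dv_powi: "discrete_valuation v \<Longrightarrow> (t::'a::field) \<noteq> 0 \<Longrightarrow> v (t powi m) = m * v t"
proof (cases "m \<ge> 0")
  case True
  assume a: "discrete_valuation v" "t \<noteq> 0"
  then show ?thesis using True dv_power[OF a, of "nat m"] by (simp add: power_int_nonneg_exp)
next
  case False
  assume a: "discrete_valuation v" "t \<noteq> 0"
  have "t powi m = inverse (t powi (-m))" using power_int_minus[of t "-m"] by simp
  also have "\<dots> = inverse (t ^ nat (-m))" using False by (simp add: power_int_nonneg_exp)
  finally show ?thesis using a dv_inverse[OF a(1), of "t ^ nat (-m)"] dv_power[OF a, of "nat (-m)"] False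
    by simp
qed

lemma O_iff: "x \<in> ring_of_integers v \<longleftrightarrow> x = 0 \<or> 0 \<le> v x"
  unfolding ring_of_integers_def val_ge_def by simp

lemma O_mult: "discrete_valuation v \<Longrightarrow> x \<in> ring_of_integers v \<Longrightarrow> y \<in> ring_of_integers v \<Longrightarrow> x * y \<in> ring_of_integers v"
proof -
  assume d: "discrete_valuation v" and x: "x \<in> ring_of_integers v" and y: "y \<in> ring_of_integers v"
  show ?thesis
  proof (cases "x = 0 \<or> y = 0")
    case False then show ?thesis using x y dv_mult[OF d, of x y] unfolding O_iff by auto
  qed (auto simp: O_iff)
qed

lemma O_add: "discrete_valuation v \<Longrightarrow> x \<in> ring_of_integers v \<Longrightarrow> y \<in> ring_of_integers v \<Longrightarrow> x + y \<in> ring_of_integers v"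
  unfolding O_iff using dv_add[of v x y] by fastforce

lemma O_uminus: "discrete_valuation v \<Longrightarrow> x \<in> ring_of_integers v \<Longrightarrow> - x \<in> ring_of_integers v"
proof -
  assume d: "discrete_valuation v" and x: "x \<in> ring_of_integers v"
  show ?thesis
  proof (cases "x = 0")
    case False then show ?thesis using x dv_uminus[OF d False] unfolding O_iff by auto
  qed (auto simp: O_iff)
qed

lemma O_diff: "discrete_valuation v \<Longrightarrow> x \<in> ring_of_integers v \<Longrightarrow> y \<in> ring_of_integers v \<Longrightarrow> x - y \<in> ring_of_integers v"
  using O_add[of v x "-y"] O_uminus[of v y] by simp

lemma tact_inv: "(t::'a::field) \<noteq> 0 \<Longrightarrow>
  tact t n (t powi (-n) * x1, t powi n * x2, t powi (-n) * y1, t powi n * y2) = (x1, x2, y1, y2)"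
proof -
  assume t: "t \<noteq> 0"
  have e: "t powi n * t powi (-n) = 1" using t by (simp add: power_int_minus)
  have e2: "t powi (-n) * t powi n = 1" using t by (simp add: power_int_minus)
  show ?thesis unfolding tact_def
    by (simp add: mult.assoc[symmetric] e e2)
qed

lemma X_b0_int:
  assumes dv: "discrete_valuation v" and c2: "residue_char_not_2 v" and b0: "b0 \<noteq> 0"
    and X: "(x1, x2, y1, y2) \<in> Xset v b0"
  shows "b0 \<in> ring_of_integers v"
    and "x1 * y2 \<in> ring_of_integers v" and "x2 * y1 \<in> ring_of_integers v"
proof -
  have det: "x1 * y2 - x2 * y1 = b0" and p1: "x1 * x2 \<in> ring_of_integers v"
    and p2: "y1 * y2 \<in> ring_of_integers v" and s: "x1 * y2 + x2 * y1 \<in> ring_of_integers v"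
    using X unfolding Xset_def Mset_def by auto
  define s' where "s' = x1 * y2 + x2 * y1"
  have two: "(2::'a) \<noteq> 0" "v 2 = 0" using c2 unfolding residue_char_not_2_def by auto
  have ab: "(x1 * x2) * (y1 * y2) \<in> ring_of_integers v" using O_mult[OF dv p1 p2] .
  have four: "(4::'a) \<in> ring_of_integers v" using O_mult[OF dv, of 2 2] two unfolding O_iff by simp
  have "4 * ((x1 * x2) * (y1 * y2)) = s' * s' - b0 * b0"
    unfolding s'_def det[symmetric] by (simp add: algebra_simps)
  hence "s' * s' - b0 * b0 \<in> ring_of_integers v" using O_mult[OF dv four ab] by simp
  hence "b0 * b0 \<in> ring_of_integers v"
    using O_diff[OF dv O_mult[OF dv s s], of "s' * s' - b0 * b0"] unfolding s'_def by simp
  then show b: "b0 \<in> ring_of_integers v"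
    unfolding O_iff using dv_mult[OF dv assms(3) assms(3)] by auto
  have i2: "inverse (2::'a) \<in> ring_of_integers v" using dv_inverse[OF dv two(1)] two unfolding O_iff by simp
  have sO: "s' \<in> ring_of_integers v" using s unfolding s'_def .
  have eq1: "x1 * y2 = inverse 2 * (b0 + s')" unfolding s'_def det[symmetric] using two
    by (simp add: field_simps)
  show "x1 * y2 \<in> ring_of_integers v"
    unfolding eq1 by (rule O_mult[OF dv i2 O_add[OF dv b sO]])
  have eq2: "x2 * y1 = inverse 2 * (s' - b0)" unfolding s'_def det[symmetric] using two
    by (simp add: field_simps)
  show "x2 * y1 \<in> ring_of_integers v"
    unfolding eq2 by (rule O_mult[OF dv i2 O_diff[OF dv sO b]])
qed

theorem lemma4p12:
  fixes v :: "'a::field \<Rightarrow> int" and t b0 :: 'a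
  assumes "nonarch_local_field v"
    and "residue_char_not_2 v"
    and "uniformizer v t"
    and "b0 \<noteq> 0"
  shows "Xset v b0 = (\<Union>n::int. tact t n ` Mset_int v b0)
     \<and> (b0 \<notin> ring_of_integers v \<longrightarrow> Xset v b0 = {})"
proof -
  have dv: "discrete_valuation v" using assms(1) unfolding nonarch_local_field_def by simp
  have t0: "t \<noteq> 0" and vt: "v t = 1" using assms(3) unfolding uniformizer_def by auto
  have vp: "v (t powi m) = m" for m using dv_powi[OF dv t0, of m] vt by simp
  have sub1: "(\<Union>n::int. tact t n ` Mset_int v b0) \<subseteq> Xset v b0"
  proof
    fix p assume "p \<in> (\<Union>n::int. tact t n ` Mset_int v b0)"
    then obtain n x1 x2 y1 y2 where p: "p = tact t n (x1, x2, y1, y2)"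
      and m: "(x1, x2, y1, y2) \<in> Mset_int v b0" by auto
    have e: "t powi n * t powi (-n) = 1" using t0 by (simp add: power_int_minus)
    have det: "x1 * y2 - x2 * y1 = b0" and i: "x1 \<in> ring_of_integers v" "x2 \<in> ring_of_integers v"
      "y1 \<in> ring_of_integers v" "y2 \<in> ring_of_integers v"
      using m unfolding Mset_int_def Mset_def by auto
    have r1: "t powi n * x1 * (t powi (-n) * x2) = x1 * x2"
      by (metis (no_types, lifting) e mult.assoc mult.commute mult_1)
    have r2: "t powi n * y1 * (t powi (-n) * y2) = y1 * y2"
      by (metis (no_types, lifting) e mult.assoc mult.commute mult_1)
    have r3: "t powi n * x1 * (t powi (-n) * y2) = x1 * y2"
      by (metis (no_types, lifting) e mult.assoc mult.commute mult_1)
    have r4: "t powi (-n) * x2 * (t powi n * y1) = x2 * y1"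
      by (metis (no_types, lifting) e mult.assoc mult.commute mult_1)
    show "p \<in> Xset v b0" unfolding p tact_def Xset_def Mset_def
      apply (simp only: case_prod_conv mem_Collect_eq r1 r2 r3 r4)
      using r1 r2 r3 r4 det O_mult[OF dv i(1) i(2)] O_mult[OF dv i(3) i(4)]
        O_add[OF dv O_mult[OF dv i(1) i(4)] O_mult[OF dv i(2) i(3)]] by simp
  qed
  have sub2: "Xset v b0 \<subseteq> (\<Union>n::int. tact t n ` Mset_int v b0)"
  proof
    fix p assume pX: "p \<in> Xset v b0"
    obtain x1 x2 y1 y2 where pe: "p = (x1, x2, y1, y2)" by (cases p) auto
    have X: "(x1, x2, y1, y2) \<in> Xset v b0" using pX pe by simp
    have det: "x1 * y2 - x2 * y1 = b0" and p1: "x1 * x2 \<in> ring_of_integers v"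
      and p2: "y1 * y2 \<in> ring_of_integers v"
      using X unfolding Xset_def Mset_def by auto
    have a: "x1 * y2 \<in> ring_of_integers v" and b: "x2 * y1 \<in> ring_of_integers v"
      using X_b0_int[OF dv assms(2) assms(4) X] by auto
    have nz1: "x1 \<noteq> 0 \<or> y1 \<noteq> 0" using det assms(4) by auto
    have nz2: "x2 \<noteq> 0 \<or> y2 \<noteq> 0" using det assms(4) by auto
    define n where "n = (if x1 \<noteq> 0 \<and> y1 \<noteq> 0 then min (v x1) (v y1) else if x1 \<noteq> 0 then v x1 else v y1)"
    have n1: "x1 \<noteq> 0 \<Longrightarrow> n \<le> v x1" and n2: "y1 \<noteq> 0 \<Longrightarrow> n \<le> v y1" unfolding n_def by auto
    have vm: "u \<noteq> 0 \<Longrightarrow> w \<noteq> 0 \<Longrightarrow> u * w \<in> ring_of_integers v \<Longrightarrow> 0 \<le> v u + v w" for u w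
      using dv_mult[OF dv, of u w] unfolding O_iff by auto
    have n3: "x2 \<noteq> 0 \<Longrightarrow> - n \<le> v x2"
      using nz1 vm[OF _ _ p1] vm[of x2 y1] b unfolding n_def by (auto simp: mult.commute)
    have n4: "y2 \<noteq> 0 \<Longrightarrow> - n \<le> v y2"
      using nz1 vm[OF _ _ p2] vm[OF _ _ a] unfolding n_def by (auto simp: mult.commute)
    have im: "u = 0 \<or> k \<le> v u \<Longrightarrow> t powi (-k) * u \<in> ring_of_integers v" for u k
    proof (cases "u = 0")
      case False
      assume h: "u = 0 \<or> k \<le> v u"
      have "t powi (-k) \<noteq> 0" using t0 by simp
      then show ?thesis unfolding O_iff using dv_mult[OF dv _ False, of "t powi (-k)"] vp[of "-k"] h False by auto
    qed (auto simp: O_iff)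
    have e: "t powi n * t powi (-n) = 1" using t0 by (simp add: power_int_minus)
    define q where "q = (t powi (-n) * x1, t powi n * x2, t powi (-n) * y1, t powi n * y2)"
    have q1: "t powi (-n) * x1 \<in> ring_of_integers v" using im n1 by blast
    have q3: "t powi (-n) * y1 \<in> ring_of_integers v" using im n2 by blast
    have q2: "t powi n * x2 \<in> ring_of_integers v" using im[of x2 "-n"] n3 by fastforce
    have q4: "t powi n * y2 \<in> ring_of_integers v" using im[of y2 "-n"] n4 by fastforce
    have r3: "t powi (-n) * x1 * (t powi n * y2) = x1 * y2"
      by (metis (no_types, lifting) e mult.assoc mult.commute mult_1)
    have r4: "t powi n * x2 * (t powi (-n) * y1) = x2 * y1"
      by (metis (no_types, lifting) e mult.assoc mult.commute mult_1)
    have "q \<in> Mset_int v b0" unfolding q_def Mset_int_def Mset_def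
      apply (simp only: case_prod_conv mem_Collect_eq r3 r4)
      using q1 q2 q3 q4 r3 r4 det by simp
    moreover have "tact t n q = p" unfolding q_def pe using tact_inv[OF t0] by simp
    ultimately show "p \<in> (\<Union>n::int. tact t n ` Mset_int v b0)" by blast
  qed
  have emp: "b0 \<notin> ring_of_integers v \<longrightarrow> Xset v b0 = {}"
  proof
    assume "b0 \<notin> ring_of_integers v"
    then show "Xset v b0 = {}" using X_b0_int(1)[OF dv assms(2) assms(4)] by fast
  qed
  show ?thesis using sub1 sub2 emp by blast
qed

end
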